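(* Let $\ell\ge 2$, $K\ge 1$ and $C_0>0$. There is a constant $M=M(K,\ell,C_0)$ such that the following holds. Let $G$ be a bipartite $n$-vertex graph containing no copy of $C_{2\ell}^{\square}$, with average degree $d\ge C_0n^{1/2}$ and maximum degree at most $Kd$, and let $uv\in E(G)$. Then the number of rich $4$-tuples $(w,z,w',z')$ such that $uz,uz',vw,vw'\in E(G)$ and $d(u,w),d(u,w'),d(v,z),d(v,z')\le C_0d^{1/2}$ is at most $Md^2$.
   Context: $d(a,b)$ denotes the number of common neighbours of $a,b$. For distinct vertices $w,z,w',z'$, the $4$-tuple $(w,z,w',z')$ is rich if $wz,w'z'\in E(G)$ and there are at least $4\ell$ pairwise vertex-disjoint edges $xy\in E(G)$ with $wx,xw',zy,yz'\in E(G)$. $C_{2\ell}^{\square}$ consists of two vertex-disjoint $2\ell$-cycles $a_1\cdots a_{2\ell}a_1$, $b_1\cdots b_{2\ell}b_1$ plus the edges $a_ib_i$. *)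

theory Defs
  imports Complex_Main
begin

definition graph :: "'a set \<Rightarrow> ('a \<Rightarrow> 'a \<Rightarrow> bool) \<Rightarrow> bool" where
  "graph V E \<longleftrightarrow> finite V \<and> (\<forall>x y. E x y \<longrightarrow> x \<in> V \<and> y \<in> V)
     \<and> (\<forall>x y. E x y \<longrightarrow> E y x) \<and> (\<forall>x. \<not> E x x)"

definition bipartite :: "'a set \<Rightarrow> ('a \<Rightarrow> 'a \<Rightarrow> bool) \<Rightarrow> bool" where
  "bipartite V E \<longleftrightarrow> (\<exists>A\<subseteq>V. \<forall>x y. E x y \<longrightarrow> (x \<in> A \<longleftrightarrow> y \<notin> A))"

definition degree :: "'a set \<Rightarrow> ('a \<Rightarrow> 'a \<Rightarrow> bool) \<Rightarrow> 'a \<Rightarrow> nat" where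
  "degree V E v = card {w \<in> V. E v w}"

definition avg_degree :: "'a set \<Rightarrow> ('a \<Rightarrow> 'a \<Rightarrow> bool) \<Rightarrow> real" where
  "avg_degree V E = (\<Sum>v\<in>V. real (degree V E v)) / real (card V)"

definition codeg :: "'a set \<Rightarrow> ('a \<Rightarrow> 'a \<Rightarrow> bool) \<Rightarrow> 'a \<Rightarrow> 'a \<Rightarrow> nat" where
  "codeg V E a b = card {c \<in> V. E a c \<and> E b c}"

text \<open>G contains a (not necessarily induced) copy of the prism C_{2l}^square:
  cycles a_0..a_{2l-1}, b_0..b_{2l-1} (indices mod 2l) plus the rungs a_i b_i,
  embedded injectively.\<close>
definition contains_prism :: "'a set \<Rightarrow> ('a \<Rightarrow> 'a \<Rightarrow> bool) \<Rightarrow> nat \<Rightarrow> bool" where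
  "contains_prism V E l \<longleftrightarrow> (\<exists>a b :: nat \<Rightarrow> 'a.
     a ` {..<2*l} \<subseteq> V \<and> b ` {..<2*l} \<subseteq> V \<and>
     inj_on a {..<2*l} \<and> inj_on b {..<2*l} \<and> a ` {..<2*l} \<inter> b ` {..<2*l} = {} \<and>
     (\<forall>i<2*l. E (a i) (a (Suc i mod (2*l))) \<and> E (b i) (b (Suc i mod (2*l))) \<and> E (a i) (b i)))"

definition rich :: "'a set \<Rightarrow> ('a \<Rightarrow> 'a \<Rightarrow> bool) \<Rightarrow> nat \<Rightarrow> 'a \<Rightarrow> 'a \<Rightarrow> 'a \<Rightarrow> 'a \<Rightarrow> bool" where
  "rich V E l w z w' z' \<longleftrightarrow> distinct [w, z, w', z'] \<and> E w z \<and> E w' z' \<and>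
     (\<exists>P :: ('a \<times> 'a) set. finite P \<and> card P \<ge> 4 * l \<and>
        (\<forall>(x, y)\<in>P. E x y \<and> E w x \<and> E x w' \<and> E z y \<and> E y z') \<and>
        (\<forall>p\<in>P. \<forall>q\<in>P. p \<noteq> q \<longrightarrow> {fst p, snd p} \<inter> {fst q, snd q} = {}))"

end

theory Submission
  imports Defs
begin

definition rv :: "'a \<times> 'a \<Rightarrow> 'a set" where "rv r = {fst r, snd r}"

lemma finite_rv[simp]: "finite (rv r)" by (simp add: rv_def)

lemma card_rv: "card (rv r) \<le> 2"
  unfolding rv_def by (cases "fst r = snd r") auto

lemma avoid_lemma:
  assumes "finite S" "finite B" "card B < card S"
    and disj: "\<forall>p\<in>S. \<forall>q\<in>S. p \<noteq> q \<longrightarrow> rv p \<inter> rv q = {}"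
  shows "\<exists>e\<in>S. rv e \<inter> B = {}"
proof (rule ccontr)
  assume "\<not> ?thesis"
  then have h: "\<forall>e\<in>S. \<exists>x. x \<in> rv e \<inter> B" by auto
  from bchoice[OF h] obtain g where g: "\<forall>e\<in>S. g e \<in> rv e \<inter> B" by blast
  have "inj_on g S"
  proof (rule inj_onI)
    fix p q assume pq: "p \<in> S" "q \<in> S" "g p = g q"
    show "p = q"
    proof (rule ccontr)
      assume "p \<noteq> q"
      then have "rv p \<inter> rv q = {}" using disj pq by blast
      moreover have "g p \<in> rv p" "g p \<in> rv q" using g pq by auto
      ultimately show False by blast
    qed
  qed
  moreover have "g ` S \<subseteq> B" using g by auto
  ultimately have "card S \<le> card B" using card_inj_on_le assms(2) by blast
  then show False using assms(3) by simp
qed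

lemma card_UN_rv:
  "card (\<Union>i<k. rv (q i)) \<le> 2 * k"
proof -
  have "card (\<Union>i<k. rv (q i)) \<le> (\<Sum>i<k. card (rv (q i)))" by (rule card_UN_le) simp
  also have "\<dots> \<le> (\<Sum>i<k. 2)" by (rule sum_mono) (rule card_rv)
  finally show ?thesis by simp
qed

lemma middle_choice:
  fixes Pf :: "nat \<Rightarrow> ('a \<times> 'a) set" and A :: "'a set"
  assumes fin: "\<And>i. i < k \<Longrightarrow> finite (Pf i)"
    and cardP: "\<And>i. i < k \<Longrightarrow> N \<le> card (Pf i)"
    and disj: "\<And>i. i < k \<Longrightarrow> \<forall>p\<in>Pf i. \<forall>q\<in>Pf i. p \<noteq> q \<longrightarrow> rv p \<inter> rv q = {}"
    and finA: "finite A" and cA: "card A + 2 * k \<le> N"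
  shows "\<exists>mm. (\<forall>i<k. mm i \<in> Pf i \<and> rv (mm i) \<inter> A = {}) \<and>
               (\<forall>i<k. \<forall>j<k. i \<noteq> j \<longrightarrow> rv (mm i) \<inter> rv (mm j) = {})"
  using fin cardP disj cA
proof (induction k)
  case 0 then show ?case by auto
next
  case (Suc k)
  have "\<exists>mm. (\<forall>i<k. mm i \<in> Pf i \<and> rv (mm i) \<inter> A = {}) \<and>
               (\<forall>i<k. \<forall>j<k. i \<noteq> j \<longrightarrow> rv (mm i) \<inter> rv (mm j) = {})"
  proof (rule Suc.IH)
    fix i assume i: "i < k"
    show "finite (Pf i)" using Suc.prems(1) i by simp
    show "N \<le> card (Pf i)" using Suc.prems(2) i by simp
    show "\<forall>p\<in>Pf i. \<forall>q\<in>Pf i. p \<noteq> q \<longrightarrow> rv p \<inter> rv q = {}" using Suc.prems(3)[of i] i by simp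
  next
    show "card A + 2 * k \<le> N" using Suc.prems(4) by simp
  qed
  then obtain mm where mm: "\<forall>i<k. mm i \<in> Pf i \<and> rv (mm i) \<inter> A = {}"
    "\<forall>i<k. \<forall>j<k. i \<noteq> j \<longrightarrow> rv (mm i) \<inter> rv (mm j) = {}" by blast
  define B where "B = A \<union> (\<Union>i<k. rv (mm i))"
  have finB: "finite B" unfolding B_def using finA by auto
  have "card B \<le> card A + card (\<Union>i<k. rv (mm i))" unfolding B_def by (rule card_Un_le)
  also have "\<dots> \<le> card A + 2 * k" using card_UN_rv[where k=k and q=mm] by simp
  also have "\<dots> < N" using Suc.prems(4) by simp
  also have "\<dots> \<le> card (Pf k)" using Suc.prems(2) by simp
  finally have "card B < card (Pf k)" .
  then obtain e where e: "e \<in> Pf k" "rv e \<inter> B = {}"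
    using avoid_lemma[OF Suc.prems(1) finB] Suc.prems(3) by blast
  show ?case
  proof (rule exI[of _ "mm(k := e)"], intro conjI allI impI)
    fix i assume "i < Suc k"
    then show "(mm(k := e)) i \<in> Pf i"
      using mm e B_def by (cases "i = k") auto
  next
    fix i assume "i < Suc k"
    then show "rv ((mm(k := e)) i) \<inter> A = {}"
      using mm e B_def by (cases "i = k") auto
  next
    fix i j assume "i < Suc k" "j < Suc k" "i \<noteq> j"
    then show "rv ((mm(k := e)) i) \<inter> rv ((mm(k := e)) j) = {}"
      using mm e B_def by (cases "i = k"; cases "j = k") auto
  qed
qed

definition blocked :: "('a\<times>'a) set \<Rightarrow> 'a set \<Rightarrow> ('a\<times>'a) set" where
  "blocked R X = {r\<in>R. rv r \<inter> X \<noteq> {}}"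

lemma card_blocked:
  assumes "finite R" "finite X" "\<forall>a. real (card {r\<in>R. a \<in> rv r}) \<le> c"
  shows "real (card (blocked R X)) \<le> real (card X) * c"
proof -
  have "blocked R X = (\<Union>a\<in>X. {r\<in>R. a \<in> rv r})" unfolding blocked_def by auto
  then have "card (blocked R X) \<le> (\<Sum>a\<in>X. card {r\<in>R. a \<in> rv r})"
    using card_UN_le[OF assms(2)] by simp
  then have "real (card (blocked R X)) \<le> real (\<Sum>a\<in>X. card {r\<in>R. a \<in> rv r})"
    by (simp only: of_nat_le_iff)
  also have "\<dots> = (\<Sum>a\<in>X. real (card {r\<in>R. a \<in> rv r}))" by (rule of_nat_sum)
  also have "\<dots> \<le> (\<Sum>a\<in>X. c)" by (rule sum_mono) (use assms(3) in auto)
  also have "\<dots> = real (card X) * c" by simp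
  finally show ?thesis .
qed

lemma greedy_path:
  assumes finR: "finite R" and finF: "finite F"
    and cb: "\<forall>a. real (card {r\<in>R. a \<in> rv r}) \<le> c"
    and deg: "\<forall>r\<in>R. real (card {r'\<in>R. L r r'}) > (real (card F) + 2 * real l) * c"
    and ne: "R \<noteq> {}"
    and kl: "k \<le> l"
  shows "\<exists>q. (\<forall>i<k. q i \<in> R \<and> rv (q i) \<inter> F = {}) \<and>
             (\<forall>i<k. \<forall>j<k. i \<noteq> j \<longrightarrow> rv (q i) \<inter> rv (q j) = {}) \<and>
             (\<forall>i. Suc i < k \<longrightarrow> L (q i) (q (Suc i)))"
  using kl
proof (induction k)
  case 0 then show ?case by auto
next
  case (Suc k)
  then obtain q where q: "\<forall>i<k. q i \<in> R \<and> rv (q i) \<inter> F = {}"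
    "\<forall>i<k. \<forall>j<k. i \<noteq> j \<longrightarrow> rv (q i) \<inter> rv (q j) = {}"
    "\<forall>i. Suc i < k \<longrightarrow> L (q i) (q (Suc i))" by auto
  define Cd where "Cd = (if k = 0 then R else {r'\<in>R. L (q (k-1)) r'})"
  define X where "X = F \<union> (\<Union>i<k. rv (q i))"
  have finX: "finite X" unfolding X_def using finF by auto
  have "card X \<le> card F + card (\<Union>i<k. rv (q i))" unfolding X_def by (rule card_Un_le)
  then have cX: "card X \<le> card F + 2 * k" using card_UN_rv[where k=k and q=q] by simp
  have c0: "c \<ge> 0" using cb by (meson of_nat_0_le_iff order_trans)
  have "real (card (blocked R X)) \<le> real (card X) * c" by (rule card_blocked[OF finR finX cb])
  also have "\<dots> \<le> (real (card F) + 2 * real l) * c"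
  proof (rule mult_right_mono[OF _ c0])
    have "card X \<le> card F + 2 * l" using cX Suc.prems by simp
    then show "real (card X) \<le> real (card F) + 2 * real l" by linarith
  qed
  also have "\<dots> < real (card Cd)"
  proof (cases "k = 0")
    case True
    obtain r0 where r0: "r0 \<in> R" using ne by auto
    then have "(real (card F) + 2 * real l) * c < real (card {r'\<in>R. L r0 r'})" using deg by auto
    also have "\<dots> \<le> real (card R)" by (simp add: card_mono finR)
    finally show ?thesis using True Cd_def by simp
  next
    case False
    then have "q (k-1) \<in> R" using q(1) by auto
    then show ?thesis using deg False Cd_def by auto
  qed
  finally have lt: "card (blocked R X) < card Cd" by simp
  have CdR: "Cd \<subseteq> R" unfolding Cd_def by auto
  have "\<not> Cd \<subseteq> blocked R X"
  proof
    assume "Cd \<subseteq> blocked R X"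
    moreover have "finite (blocked R X)" using finR unfolding blocked_def by auto
    ultimately have "card Cd \<le> card (blocked R X)" by (rule card_mono[rotated])
    then show False using lt by simp
  qed
  then obtain r where r: "r \<in> Cd" "r \<notin> blocked R X" by blast
  then have rR: "r \<in> R" and rX: "rv r \<inter> X = {}" using CdR unfolding blocked_def by auto
  show ?case
  proof (rule exI[of _ "q(k := r)"], intro conjI allI impI)
    fix i assume "i < Suc k"
    then show "(q(k := r)) i \<in> R"
      using q rR rX X_def by (cases "i = k") auto
  next
    fix i assume "i < Suc k"
    then show "rv ((q(k := r)) i) \<inter> F = {}"
      using q rR rX X_def by (cases "i = k") auto
  next
    fix i j assume "i < Suc k" "j < Suc k" "i \<noteq> j"
    then show "rv ((q(k := r)) i) \<inter> rv ((q(k := r)) j) = {}"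
      using q rX X_def by (cases "i = k"; cases "j = k") auto
  next
    fix i assume i: "Suc i < Suc k"
    show "L ((q(k := r)) i) ((q(k := r)) (Suc i))"
    proof (cases "Suc i < k")
      case True then show ?thesis using q(3) by auto
    next
      case False
      then have "Suc i = k" using i by simp
      then show ?thesis using r(1) Cd_def by auto
    qed
  qed
qed

lemma sparse_aux:
  fixes R :: "('a \<times> 'a) set"
  assumes finF: "finite F"
    and sym: "\<forall>r r'. L r r' \<longrightarrow> L r' r"
  shows "card R = n \<Longrightarrow> finite R \<Longrightarrow> (\<forall>a. real (card {r\<in>R. a \<in> rv r}) \<le> c) \<Longrightarrow>
    \<not> (\<exists>q. (\<forall>i<l. q i \<in> R \<and> rv (q i) \<inter> F = {}) \<and>
             (\<forall>i<l. \<forall>j<l. i \<noteq> j \<longrightarrow> rv (q i) \<inter> rv (q j) = {}) \<and>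
             (\<forall>i. Suc i < l \<longrightarrow> L (q i) (q (Suc i)))) \<Longrightarrow>
    real (card {(r, r'). r \<in> R \<and> r' \<in> R \<and> L r r'})
       \<le> 2 * ((real (card F) + 2 * real l) * c) * real (card R)"
proof (induction n arbitrary: R)
  case 0
  then have "R = {}" by simp
  then show ?case by simp
next
  case (Suc n)
  let ?D = "(real (card F) + 2 * real l) * c"
  show ?case
  proof (cases "\<exists>r\<in>R. real (card {r'\<in>R. L r r'}) \<le> ?D")
    case True
    then obtain r where r: "r \<in> R" "real (card {r'\<in>R. L r r'}) \<le> ?D" by blast
    define R' where "R' = R - {r}"
    define Nb where "Nb = {r'\<in>R. L r r'}"
    have cR': "card R' = n" using Suc.prems(1) r(1) R'_def by simp
    have finR': "finite R'" using Suc.prems(2) R'_def by simp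
    have cb': "\<forall>a. real (card {r\<in>R'. a \<in> rv r}) \<le> c"
    proof
      fix a
      have "card {r\<in>R'. a \<in> rv r} \<le> card {r\<in>R. a \<in> rv r}"
        using Suc.prems(2) R'_def by (intro card_mono) auto
      then show "real (card {r\<in>R'. a \<in> rv r}) \<le> c" using Suc.prems(3)[rule_format, of a] by linarith
    qed
    have np': "\<not> (\<exists>q. (\<forall>i<l. q i \<in> R' \<and> rv (q i) \<inter> F = {}) \<and>
             (\<forall>i<l. \<forall>j<l. i \<noteq> j \<longrightarrow> rv (q i) \<inter> rv (q j) = {}) \<and>
             (\<forall>i. Suc i < l \<longrightarrow> L (q i) (q (Suc i))))"
      using Suc.prems(4) R'_def by blast
    have IH: "real (card {(r, r'). r \<in> R' \<and> r' \<in> R' \<and> L r r'}) \<le> 2 * ?D * real (card R')"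
      using Suc.IH[OF cR' finR' cb' np'] .
    have sub: "{(r, r'). r \<in> R \<and> r' \<in> R \<and> L r r'} \<subseteq>
       {(r, r'). r \<in> R' \<and> r' \<in> R' \<and> L r r'} \<union> (Pair r ` Nb) \<union> ((\<lambda>x. (x, r)) ` Nb)"
      using sym unfolding R'_def Nb_def by auto
    have finNb: "finite Nb" using Suc.prems(2) Nb_def by simp
    have finP': "finite {(r, r'). r \<in> R' \<and> r' \<in> R' \<and> L r r'}"
      by (rule finite_subset[of _ "R' \<times> R'"]) (use finR' in auto)
    have "card {(r, r'). r \<in> R \<and> r' \<in> R \<and> L r r'} \<le>
       card ({(r, r'). r \<in> R' \<and> r' \<in> R' \<and> L r r'} \<union> (Pair r ` Nb) \<union> ((\<lambda>x. (x, r)) ` Nb))"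
      by (rule card_mono[OF _ sub]) (use finP' finNb in auto)
    also have "\<dots> \<le> card {(r, r'). r \<in> R' \<and> r' \<in> R' \<and> L r r'} + card (Pair r ` Nb) + card ((\<lambda>x. (x, r)) ` Nb)"
      by (meson add_le_mono card_Un_le le_refl order_trans)
    also have "\<dots> \<le> card {(r, r'). r \<in> R' \<and> r' \<in> R' \<and> L r r'} + card Nb + card Nb"
      using card_image_le[OF finNb] by (meson add_le_mono le_refl)
    finally have "real (card {(r, r'). r \<in> R \<and> r' \<in> R \<and> L r r'}) \<le>
        real (card {(r, r'). r \<in> R' \<and> r' \<in> R' \<and> L r r'}) + real (card Nb) + real (card Nb)"
      by linarith
    also have "\<dots> \<le> 2 * ?D * real n + ?D + ?D" using IH[unfolded cR'] r(2) unfolding Nb_def by linarith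
    also have "\<dots> = 2 * ?D * real (card R)" using Suc.prems(1) by (simp add: algebra_simps)
    finally show ?thesis .
  next
    case False
    then have deg: "\<forall>r\<in>R. real (card {r'\<in>R. L r r'}) > ?D" by auto
    have "R \<noteq> {}" using Suc.prems(1) by auto
    from greedy_path[OF Suc.prems(2) finF Suc.prems(3) deg this le_refl]
    show ?thesis using Suc.prems(4) by blast
  qed
qed

lemma prism_of_rungs:
  assumes G: "graph V E"
    and re: "\<forall>j<2*l. E (fst (\<rho> j)) (snd (\<rho> j))"
    and sq: "\<forall>j<2*l. E (fst (\<rho> j)) (fst (\<rho> (Suc j mod (2*l)))) \<and> E (snd (\<rho> j)) (snd (\<rho> (Suc j mod (2*l))))"
    and dj: "\<forall>j<2*l. \<forall>j'<2*l. j \<noteq> j' \<longrightarrow> rv (\<rho> j) \<inter> rv (\<rho> j') = {}"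
  shows "contains_prism V E l"
  unfolding contains_prism_def
proof (rule exI[of _ "\<lambda>j. fst (\<rho> j)"], rule exI[of _ "\<lambda>j. snd (\<rho> j)"], intro conjI)
  have EV: "\<And>x y. E x y \<Longrightarrow> x \<in> V \<and> y \<in> V" and irr: "\<And>x. \<not> E x x"
    using G unfolding graph_def by auto
  show "(\<lambda>j. fst (\<rho> j)) ` {..<2 * l} \<subseteq> V" using re EV by auto
  show "(\<lambda>j. snd (\<rho> j)) ` {..<2 * l} \<subseteq> V" using re EV by auto
  show "inj_on (\<lambda>j. fst (\<rho> j)) {..<2 * l}"
  proof (rule inj_onI)
    fix j j' assume "j \<in> {..<2*l}" "j' \<in> {..<2*l}" "fst (\<rho> j) = fst (\<rho> j')"
    then show "j = j'" using dj unfolding rv_def by blast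
  qed
  show "inj_on (\<lambda>j. snd (\<rho> j)) {..<2 * l}"
  proof (rule inj_onI)
    fix j j' assume "j \<in> {..<2*l}" "j' \<in> {..<2*l}" "snd (\<rho> j) = snd (\<rho> j')"
    then show "j = j'" using dj unfolding rv_def by blast
  qed
  show "(\<lambda>j. fst (\<rho> j)) ` {..<2 * l} \<inter> (\<lambda>j. snd (\<rho> j)) ` {..<2 * l} = {}"
  proof (rule ccontr)
    assume "\<not> ?thesis"
    then obtain j j' where jj: "j < 2*l" "j' < 2*l" "fst (\<rho> j) = snd (\<rho> j')" by auto
    show False
    proof (cases "j = j'")
      case True then show False using jj re irr by metis
    next
      case False then show False using jj dj unfolding rv_def by blast
    qed
  qed
  show "\<forall>i<2 * l. E (fst (\<rho> i)) (fst (\<rho> (Suc i mod (2 * l)))) \<and>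
          E (snd (\<rho> i)) (snd (\<rho> (Suc i mod (2 * l)))) \<and> E (fst (\<rho> i)) (snd (\<rho> i))"
    using re sq by blast
qed

lemma rich_sym:
  assumes sym: "\<And>x y. E x y \<Longrightarrow> E y x" and "rich V E l w z w' z'"
  shows "rich V E l w' z' w z"
proof -
  obtain P where P: "finite P" "card P \<ge> 4 * l"
    "\<forall>(x, y)\<in>P. E x y \<and> E w x \<and> E x w' \<and> E z y \<and> E y z'"
    "\<forall>p\<in>P. \<forall>q\<in>P. p \<noteq> q \<longrightarrow> {fst p, snd p} \<inter> {fst q, snd q} = {}"
    using assms(2) unfolding rich_def by blast
  have "\<forall>(x, y)\<in>P. E x y \<and> E w' x \<and> E x w \<and> E z' y \<and> E y z"
    using P(3) sym by blast
  moreover have d: "distinct [w,z,w',z']" "E w z" "E w' z'" using assms(2) unfolding rich_def by blast+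
  moreover have "distinct [w', z', w, z]" using d(1) by auto
  ultimately show ?thesis using P(1,2,4) unfolding rich_def by blast
qed

lemma idx_cases:
  assumes "j < 2 * l"
  shows "j = 0 \<or> (\<exists>i<l. j = 2 * i + 1) \<or> (\<exists>i. Suc i < l \<and> j = 2 * i + 2)"
proof (cases "j = 0")
  case False
  show ?thesis
  proof (cases "odd j")
    case True
    then obtain i where "j = 2 * i + 1" by (metis oddE)
    then show ?thesis using assms by auto
  next
    case F2: False
    then obtain i where "j = 2 * i" by (metis evenE)
    with False obtain i' where "j = 2 * i' + 2" by (cases i) auto
    then show ?thesis using assms by auto
  qed
qed simp

theorem lemma5p6:
  fixes l :: nat and K C\<^sub>0 :: real
  assumes "l \<ge> 2" and "K \<ge> 1" and "C\<^sub>0 > 0"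
  shows "\<exists>M :: real. \<forall>(V :: nat set) (E :: nat \<Rightarrow> nat \<Rightarrow> bool) u v.
     graph V E \<longrightarrow> bipartite V E \<longrightarrow> \<not> contains_prism V E l \<longrightarrow>
     avg_degree V E \<ge> C\<^sub>0 * sqrt (real (card V)) \<longrightarrow>
     (\<forall>x\<in>V. real (degree V E x) \<le> K * avg_degree V E) \<longrightarrow>
     E u v \<longrightarrow>
     real (card {(w, z, w', z'). rich V E l w z w' z' \<and>
                  E u z \<and> E u z' \<and> E v w \<and> E v w' \<and>
                  real (codeg V E u w) \<le> C\<^sub>0 * sqrt (avg_degree V E) \<and>
                  real (codeg V E u w') \<le> C\<^sub>0 * sqrt (avg_degree V E) \<and>
                  real (codeg V E v z) \<le> C\<^sub>0 * sqrt (avg_degree V E) \<and>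
                  real (codeg V E v z') \<le> C\<^sub>0 * sqrt (avg_degree V E)})
       \<le> M * (avg_degree V E)\<^sup>2"
proof -
  define M where "M = 8 * (1 + real l) * K * C\<^sub>0^2"
  show ?thesis
  proof (rule exI[of _ M], intro allI impI)
    fix V E u v
    assume G: "graph V E" and bip: "bipartite V E" and np: "\<not> contains_prism V E l"
      and avg: "C\<^sub>0 * sqrt (real (card V)) \<le> avg_degree V E"
      and maxd: "\<forall>x\<in>V. real (degree V E x) \<le> K * avg_degree V E"
      and uv: "E u v"
    define d where "d = avg_degree V E"
    define c where "c = C\<^sub>0 * sqrt d"
    have finV: "finite V" and EV: "\<And>x y. E x y \<Longrightarrow> x \<in> V \<and> y \<in> V"
      and Esym: "\<And>x y. E x y \<Longrightarrow> E y x" and irr: "\<And>x. \<not> E x x"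
      using G unfolding graph_def by auto
    have d0: "d \<ge> 0" unfolding d_def avg_degree_def by (simp add: sum_nonneg)
    have c0: "c \<ge> 0" unfolding c_def using d0 assms(3) by simp
    have c2: "c^2 = C\<^sub>0^2 * d" unfolding c_def using d0 by (simp add: power_mult_distrib)
    define R where "R = {(w, z). E v w \<and> E u z \<and> E w z \<and> real (codeg V E u w) \<le> c \<and> real (codeg V E v z) \<le> c}"
    define L where "L = (\<lambda>r r'. rich V E l (fst r) (snd r) (fst r') (snd r'))"
    define F where "F = {u, v}"
    have Rmem: "\<And>r. r \<in> R \<longleftrightarrow> E v (fst r) \<and> E u (snd r) \<and> E (fst r) (snd r) \<and>
        real (codeg V E u (fst r)) \<le> c \<and> real (codeg V E v (snd r)) \<le> c"
      unfolding R_def by (simp add: case_prod_beta)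
    have finR: "finite R"
      by (rule finite_subset[of _ "V \<times> V"]) (use Rmem EV finV in auto)
    have finF: "finite F" unfolding F_def by simp
    have "u \<noteq> v" using uv irr by blast
    then have cF: "card F = 2" unfolding F_def by simp
    have Lsym: "\<forall>r r'. L r r' \<longrightarrow> L r' r"
    proof (intro allI impI)
      fix r r' assume "L r r'"
      then show "L r' r" unfolding L_def by (rule rich_sym[where E=E, rotated]) (erule Esym)
    qed
    have cb: "\<forall>a. real (card {r\<in>R. a \<in> rv r}) \<le> 2 * c"
    proof
      fix a
      have c1: "real (card {r\<in>R. fst r = a}) \<le> c"
      proof (cases "real (codeg V E u a) \<le> c")
        case True
        have "{r\<in>R. fst r = a} \<subseteq> (\<lambda>z. (a, z)) ` {x\<in>V. E u x \<and> E a x}"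
          using Rmem EV by (auto simp: image_iff)
        then have "card {r\<in>R. fst r = a} \<le> card ((\<lambda>z. (a, z)) ` {x\<in>V. E u x \<and> E a x})"
          by (rule card_mono[rotated]) (use finV in auto)
        also have "\<dots> \<le> codeg V E u a" unfolding codeg_def by (rule card_image_le) (use finV in auto)
        finally show ?thesis using True by linarith
      next
        case False
        then have e: "{r\<in>R. fst r = a} = {}" using Rmem by auto
        show ?thesis unfolding e using c0 by simp
      qed
      have c2: "real (card {r\<in>R. snd r = a}) \<le> c"
      proof (cases "real (codeg V E v a) \<le> c")
        case True
        have "{r\<in>R. snd r = a} \<subseteq> (\<lambda>w. (w, a)) ` {x\<in>V. E v x \<and> E a x}"
          using Rmem EV Esym by (auto simp: image_iff)
        then have "card {r\<in>R. snd r = a} \<le> card ((\<lambda>w. (w, a)) ` {x\<in>V. E v x \<and> E a x})"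
          by (rule card_mono[rotated]) (use finV in auto)
        also have "\<dots> \<le> codeg V E v a" unfolding codeg_def by (rule card_image_le) (use finV in auto)
        finally show ?thesis using True by linarith
      next
        case False
        then have e: "{r\<in>R. snd r = a} = {}" using Rmem by auto
        show ?thesis unfolding e using c0 by simp
      qed
      have "{r\<in>R. a \<in> rv r} = {r\<in>R. fst r = a} \<union> {r\<in>R. snd r = a}" unfolding rv_def by auto
      then have "card {r\<in>R. a \<in> rv r} \<le> card {r\<in>R. fst r = a} + card {r\<in>R. snd r = a}"
        by (simp add: card_Un_le)
      then show "real (card {r\<in>R. a \<in> rv r}) \<le> 2 * c" using c1 c2 by linarith
    qed
    have nopath: "\<not> (\<exists>q. (\<forall>i<l. q i \<in> R \<and> rv (q i) \<inter> F = {}) \<and>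
             (\<forall>i<l. \<forall>j<l. i \<noteq> j \<longrightarrow> rv (q i) \<inter> rv (q j) = {}) \<and>
             (\<forall>i. Suc i < l \<longrightarrow> L (q i) (q (Suc i))))"
    proof
      assume "\<exists>q. (\<forall>i<l. q i \<in> R \<and> rv (q i) \<inter> F = {}) \<and>
             (\<forall>i<l. \<forall>j<l. i \<noteq> j \<longrightarrow> rv (q i) \<inter> rv (q j) = {}) \<and>
             (\<forall>i. Suc i < l \<longrightarrow> L (q i) (q (Suc i)))"
      then obtain q where qR: "\<forall>i<l. q i \<in> R \<and> rv (q i) \<inter> F = {}"
        and qd: "\<forall>i<l. \<forall>j<l. i \<noteq> j \<longrightarrow> rv (q i) \<inter> rv (q j) = {}"
        and qL: "\<forall>i. Suc i < l \<longrightarrow> L (q i) (q (Suc i))" by blast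
      define Pf where "Pf = (\<lambda>i. SOME P. finite P \<and> card P \<ge> 4 * l \<and>
        (\<forall>(x, y)\<in>P. E x y \<and> E (fst (q i)) x \<and> E x (fst (q (Suc i))) \<and> E (snd (q i)) y \<and> E y (snd (q (Suc i)))) \<and>
        (\<forall>p\<in>P. \<forall>p'\<in>P. p \<noteq> p' \<longrightarrow> {fst p, snd p} \<inter> {fst p', snd p'} = {}))"
      have Pf: "finite (Pf i) \<and> card (Pf i) \<ge> 4 * l \<and>
        (\<forall>(x, y)\<in>Pf i. E x y \<and> E (fst (q i)) x \<and> E x (fst (q (Suc i))) \<and> E (snd (q i)) y \<and> E y (snd (q (Suc i)))) \<and>
        (\<forall>p\<in>Pf i. \<forall>p'\<in>Pf i. p \<noteq> p' \<longrightarrow> {fst p, snd p} \<inter> {fst p', snd p'} = {})" if "Suc i < l" for i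
      proof -
        have "rich V E l (fst (q i)) (snd (q i)) (fst (q (Suc i))) (snd (q (Suc i)))"
          using qL that unfolding L_def by blast
        then have "\<exists>P. finite P \<and> card P \<ge> 4 * l \<and>
          (\<forall>(x, y)\<in>P. E x y \<and> E (fst (q i)) x \<and> E x (fst (q (Suc i))) \<and> E (snd (q i)) y \<and> E y (snd (q (Suc i)))) \<and>
          (\<forall>p\<in>P. \<forall>p'\<in>P. p \<noteq> p' \<longrightarrow> {fst p, snd p} \<inter> {fst p', snd p'} = {})"
          unfolding rich_def by (elim conjE) assumption
        then show ?thesis unfolding Pf_def by (rule someI_ex)
      qed
      define A where "A = F \<union> (\<Union>i<l. rv (q i))"
      have finA: "finite A" unfolding A_def using finF by simp
      have "card A \<le> card F + card (\<Union>i<l. rv (q i))" unfolding A_def by (rule card_Un_le)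
      then have cA: "card A \<le> 2 + 2 * l" using card_UN_rv[where k=l and q=q] cF by simp
      have l2: "l \<ge> 2" using assms(1) .
      have "\<exists>mm. (\<forall>i<l-1. mm i \<in> Pf i \<and> rv (mm i) \<inter> A = {}) \<and>
               (\<forall>i<l-1. \<forall>j<l-1. i \<noteq> j \<longrightarrow> rv (mm i) \<inter> rv (mm j) = {})"
      proof (rule middle_choice[where N="4*l"])
        fix i assume i: "i < l - 1"
        then have "Suc i < l" by simp
        note P = Pf[OF this]
        show "finite (Pf i)" using P by blast
        show "4 * l \<le> card (Pf i)" using P by blast
        show "\<forall>p\<in>Pf i. \<forall>q\<in>Pf i. p \<noteq> q \<longrightarrow> rv p \<inter> rv q = {}" using P unfolding rv_def by blast
      next
        show "finite A" by (rule finA)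
        show "card A + 2 * (l - 1) \<le> 4 * l" using cA l2 by simp
      qed
      then obtain mm where mmP: "\<forall>i<l-1. mm i \<in> Pf i \<and> rv (mm i) \<inter> A = {}"
        and mmd0: "\<forall>i<l-1. \<forall>j<l-1. i \<noteq> j \<longrightarrow> rv (mm i) \<inter> rv (mm j) = {}" by blast
      have mmd: "\<And>i j. Suc i < l \<Longrightarrow> Suc j < l \<Longrightarrow> i \<noteq> j \<Longrightarrow> rv (mm i) \<inter> rv (mm j) = {}"
        using mmd0 by simp
      have mmE: "E (fst (mm i)) (snd (mm i)) \<and> E (fst (q i)) (fst (mm i)) \<and> E (fst (mm i)) (fst (q (Suc i)))
          \<and> E (snd (q i)) (snd (mm i)) \<and> E (snd (mm i)) (snd (q (Suc i)))" if "Suc i < l" for i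
      proof -
        have "mm i \<in> Pf i" using mmP that by simp
        then show ?thesis using Pf[OF that] by (cases "mm i") auto
      qed
      have mmq: "rv (mm i) \<inter> rv (q j) = {}" if ij: "Suc i < l" "j < l" for i j
      proof -
        have "i < l - 1" using ij by simp
        then have "rv (mm i) \<inter> A = {}" using mmP by blast
        moreover have "rv (q j) \<subseteq> A" unfolding A_def using ij by blast
        ultimately show ?thesis by blast
      qed
      have mmF: "\<And>i. Suc i < l \<Longrightarrow> rv (mm i) \<inter> {u, v} = {}"
        using mmP unfolding A_def F_def by auto
      have qE: "\<And>i. i < l \<Longrightarrow> E v (fst (q i)) \<and> E u (snd (q i)) \<and> E (fst (q i)) (snd (q i))"
        using qR Rmem by blast
      have qF: "\<And>i. i < l \<Longrightarrow> rv (q i) \<inter> {u, v} = {}" using qR F_def by blast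
      have qd': "\<And>i j. i < l \<Longrightarrow> j < l \<Longrightarrow> i \<noteq> j \<Longrightarrow> rv (q i) \<inter> rv (q j) = {}" using qd by blast
      define rho where "rho = (\<lambda>j. if j = 0 then (v, u) else if odd j then q ((j - 1) div 2) else mm ((j - 2) div 2))"
      have rho0: "rho 0 = (v, u)" unfolding rho_def by simp
      have rho1: "\<And>i. rho (2 * i + 1) = q i" unfolding rho_def by simp
      have rho2: "\<And>i. rho (2 * i + 2) = mm i" unfolding rho_def by simp
      have rvvu: "rv (v, u) = {u, v}" unfolding rv_def by auto
      have "contains_prism V E l"
      proof (rule prism_of_rungs[OF G])
        show "\<forall>j<2*l. E (fst (rho j)) (snd (rho j))"
        proof (intro allI impI)
          fix j assume j: "j < 2 * l"
          from idx_cases[OF j] show "E (fst (rho j)) (snd (rho j))"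
          proof (elim disjE exE conjE)
            assume "j = 0" then show ?thesis using rho0 Esym[OF uv] by simp
          next
            fix i assume "i < l" "j = 2 * i + 1" then show ?thesis using rho1 qE by simp
          next
            fix i assume "Suc i < l" "j = 2 * i + 2" then show ?thesis using rho2 mmE by simp
          qed
        qed
        show "\<forall>j<2*l. E (fst (rho j)) (fst (rho (Suc j mod (2*l)))) \<and> E (snd (rho j)) (snd (rho (Suc j mod (2*l))))"
        proof (intro allI impI)
          fix j assume j: "j < 2 * l"
          from idx_cases[OF j] show "E (fst (rho j)) (fst (rho (Suc j mod (2*l)))) \<and> E (snd (rho j)) (snd (rho (Suc j mod (2*l))))"
          proof (elim disjE exE conjE)
            assume j0: "j = 0"
            have "Suc j mod (2*l) = 2 * 0 + 1" using j0 l2 by simp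
            then show ?thesis using j0 rho0 rho1[of 0] qE[of 0] l2 by simp
          next
            fix i assume i: "i < l" "j = 2 * i + 1"
            show ?thesis
            proof (cases "Suc i < l")
              case True
              then have "Suc j mod (2*l) = 2 * i + 2" using i by simp
              then show ?thesis using i rho1 rho2 mmE[OF True] by simp
            next
              case False
              then have "Suc j = 2 * l" using i by simp
              then have "Suc j mod (2*l) = 0" by simp
              then show ?thesis using i rho1 rho0 qE[of i] Esym by simp
            qed
          next
            fix i assume i: "Suc i < l" "j = 2 * i + 2"
            then have m: "Suc (2 * i + 2) mod (2*l) = 2 * Suc i + 1" by simp
            show ?thesis unfolding i(2) m rho1 rho2 using mmE[OF i(1)] by simp
          qed
        qed
        show "\<forall>j<2*l. \<forall>j'<2*l. j \<noteq> j' \<longrightarrow> rv (rho j) \<inter> rv (rho j') = {}"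
        proof (intro allI impI)
          fix j j' assume j: "j < 2 * l" and j': "j' < 2 * l" and jj: "j \<noteq> j'"
          from idx_cases[OF j] idx_cases[OF j'] show "rv (rho j) \<inter> rv (rho j') = {}"
            using jj rho0 rho1 rho2 rvvu mmF mmq qF qd' mmd
            by (elim disjE exE conjE) (auto simp: Int_commute)
        qed
      qed
      then show False using np by blast
    qed
    have pairs: "real (card {(r, r'). r \<in> R \<and> r' \<in> R \<and> L r r'})
       \<le> 2 * ((real (card F) + 2 * real l) * (2 * c)) * real (card R)"
      by (rule sparse_aux[OF finF Lsym refl finR cb nopath])
    have cardR: "real (card R) \<le> K * d * c"
    proof -
      define W where "W = {w\<in>V. E v w \<and> real (codeg V E u w) \<le> c}"
      define S where "S = (\<lambda>w. {z\<in>V. E u z \<and> E w z})"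
      have finW: "finite W" using finV W_def by simp
      have finS: "\<forall>w\<in>W. finite (S w)" using finV S_def by simp
      have "R \<subseteq> Sigma W S"
      proof
        fix r assume "r \<in> R"
        then show "r \<in> Sigma W S" using Rmem[of r] EV unfolding W_def S_def by (cases r) auto
      qed
      then have "card R \<le> card (Sigma W S)" by (rule card_mono[rotated]) (use finW finS in auto)
      also have "\<dots> = (\<Sum>w\<in>W. card (S w))" using finW finS by simp
      finally have "real (card R) \<le> real (\<Sum>w\<in>W. card (S w))" by (simp only: of_nat_le_iff)
      also have "\<dots> = (\<Sum>w\<in>W. real (card (S w)))" by (rule of_nat_sum)
      also have "\<dots> \<le> (\<Sum>w\<in>W. c)"
      proof (rule sum_mono)
        fix w assume "w \<in> W"
        then show "real (card (S w)) \<le> c" unfolding W_def S_def codeg_def by simp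
      qed
      also have "\<dots> = real (card W) * c" by simp
      also have "\<dots> \<le> real (degree V E v) * c"
      proof (rule mult_right_mono[OF _ c0])
        have "W \<subseteq> {w\<in>V. E v w}" unfolding W_def by auto
        then have "card W \<le> degree V E v" unfolding degree_def by (rule card_mono[rotated]) (use finV in simp)
        then show "real (card W) \<le> real (degree V E v)" by simp
      qed
      also have "\<dots> \<le> K * d * c"
      proof (rule mult_right_mono[OF _ c0])
        have "v \<in> V" using EV uv by blast
        then show "real (degree V E v) \<le> K * d" using maxd d_def by blast
      qed
      finally show ?thesis .
    qed
    define T where "T = {(w, z, w', z'). rich V E l w z w' z' \<and>
                  E u z \<and> E u z' \<and> E v w \<and> E v w' \<and>
                  real (codeg V E u w) \<le> c \<and> real (codeg V E u w') \<le> c \<and>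
                  real (codeg V E v z) \<le> c \<and> real (codeg V E v z') \<le> c}"
    have finPairs: "finite {(r, r'). r \<in> R \<and> r' \<in> R \<and> L r r'}"
      by (rule finite_subset[of _ "R \<times> R"]) (use finR in auto)
    have "T \<subseteq> (\<lambda>(r, r'). (fst r, snd r, fst r', snd r')) ` {(r, r'). r \<in> R \<and> r' \<in> R \<and> L r r'}"
    proof
      fix t assume "t \<in> T"
      then obtain w z w' z' where t: "t = (w, z, w', z')" and ht: "rich V E l w z w' z' \<and>
                  E u z \<and> E u z' \<and> E v w \<and> E v w' \<and>
                  real (codeg V E u w) \<le> c \<and> real (codeg V E u w') \<le> c \<and>
                  real (codeg V E v z) \<le> c \<and> real (codeg V E v z') \<le> c"
        unfolding T_def by blast
      have rch: "rich V E l w z w' z'" using ht by blast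
      then have "E w z" "E w' z'" unfolding rich_def by blast+
      then have "((w, z), (w', z')) \<in> {(r, r'). r \<in> R \<and> r' \<in> R \<and> L r r'}"
        using ht unfolding R_def L_def by auto
      then show "t \<in> (\<lambda>(r, r'). (fst r, snd r, fst r', snd r')) ` {(r, r'). r \<in> R \<and> r' \<in> R \<and> L r r'}"
        using t by force
    qed
    then have "card T \<le> card ((\<lambda>(r, r'). (fst r, snd r, fst r', snd r')) ` {(r, r'). r \<in> R \<and> r' \<in> R \<and> L r r'})"
      by (rule card_mono[rotated]) (use finPairs in auto)
    also have "\<dots> \<le> card {(r, r'). r \<in> R \<and> r' \<in> R \<and> L r r'}" by (rule card_image_le[OF finPairs])
    finally have "real (card T) \<le> real (card {(r, r'). r \<in> R \<and> r' \<in> R \<and> L r r'})" by simp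
    also have "\<dots> \<le> 2 * ((2 + 2 * real l) * (2 * c)) * real (card R)" using pairs cF by simp
    also have "\<dots> \<le> 2 * ((2 + 2 * real l) * (2 * c)) * (K * d * c)"
      by (rule mult_left_mono[OF cardR]) (use c0 in simp)
    also have "\<dots> = 8 * (1 + real l) * K * d * c^2"
      by (simp add: algebra_simps power2_eq_square)
    also have "\<dots> = M * d^2" unfolding M_def c2 by (simp add: algebra_simps power2_eq_square)
    finally show "real (card {(w, z, w', z'). rich V E l w z w' z' \<and>
                  E u z \<and> E u z' \<and> E v w \<and> E v w' \<and>
                  real (codeg V E u w) \<le> C\<^sub>0 * sqrt (avg_degree V E) \<and>
                  real (codeg V E u w') \<le> C\<^sub>0 * sqrt (avg_degree V E) \<and>
                  real (codeg V E v z) \<le> C\<^sub>0 * sqrt (avg_degree V E) \<and>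
                  real (codeg V E v z') \<le> C\<^sub>0 * sqrt (avg_degree V E)})
       \<le> M * (avg_degree V E)\<^sup>2"
      unfolding T_def c_def d_def .
  qed
qed

end
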